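(* Let $\mathbb{A}$ be a monoidal category and $\mathbb{X}$ a right $\mathbb{A}$-enriched category. Fix $X\in\mathbb{X}$, $A\in\mathbb{A}$ and an object $X\lhd A\in\mathbb{X}$, and suppose given, for all $B\in\mathbb{A}$ and $Y\in\mathbb{X}$, mutually inverse bijections $(-)^\Downarrow$ from morphisms $f:B\to\mathrm{Hom}(X\lhd A,Y)$ to morphisms $A\otimes B\to\mathrm{Hom}(X,Y)$ and $(-)^\Uparrow$ in the reverse direction. Then the following are equivalent: (i) there exists $\eta:A\to\mathrm{Hom}(X,X\lhd A)$ such that $(f)^\Downarrow=(\eta\otimes f)m$ for all such $f$; (ii) for all morphisms of the appropriate types: (a) $(1\otimes h)(f)^\Downarrow=(hf)^\Downarrow$; (b) $h(g)^\Uparrow=((1\otimes h)g)^\Uparrow$; (c) $((f)^\Downarrow\otimes g)m=a_\otimes((f\otimes g)m)^\Downarrow$; (d) $((f)^\Uparrow\otimes g)m=(a_\otimes(f\otimes g)m)^\Uparrow$. Here in (a) $h:B'\to B$, $f:B\to\mathrm{Hom}(X\lhd A,Y)$; in (b) $h:B'\to B$, $g:A\otimes B\to\mathrm{Hom}(X,Y)$; in (c) $f:B\to\mathrm{Hom}(X\lhd A,Y)$, $g:C\to\mathrm{Hom}(Y,Z)$; in (d) $f:A\otimes B\to\mathrm{Hom}(X,Y)$, $g:C\to\mathrm{Hom}(Y,Z)$; and $a_\otimes:(A\otimes B)\otimes C\to A\otimes(B\otimes C)$ is the associativity isomorphism.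
   Context: Composition is written in diagrammatic order: $fg$ means first $f$ then $g$. $\mathbb{A}$ is monoidal with tensor $\otimes$, unit $I$, associator $a_\otimes$ and unitors $u^L_\otimes:I\otimes A\to A$, $u^R_\otimes:A\otimes I\to A$. A right $\mathbb{A}$-enriched category $\mathbb{X}$ has hom-objects $\mathrm{Hom}(X,Y)\in\mathbb{A}$, composition morphisms $m=m_{XYZ}:\mathrm{Hom}(X,Y)\otimes\mathrm{Hom}(Y,Z)\to\mathrm{Hom}(X,Z)$ and units $id_X:I\to\mathrm{Hom}(X,X)$ satisfying the associativity law $(m\otimes1)m=a_\otimes(1\otimes m)m$ and unit laws $(id\otimes1)m=u^L_\otimes$, $(1\otimes id)m=u^R_\otimes$. *)

theory Defs
  imports Main
begin

text \<open>Categories are given by a set of arrows (predicate Arr), source/target maps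
  Dom/Cod, composition Cmp written in DIAGRAMMATIC order (Cmp f g = "first f then g")
  and identities Idn.\<close>

locale category =
  fixes Arr :: "'m \<Rightarrow> bool"
    and Dom :: "'m \<Rightarrow> 'o"
    and Cod :: "'m \<Rightarrow> 'o"
    and Cmp :: "'m \<Rightarrow> 'm \<Rightarrow> 'm"
    and Idn :: "'o \<Rightarrow> 'm"
  assumes id_arr: "Arr (Idn x)" and id_dom: "Dom (Idn x) = x" and id_cod: "Cod (Idn x) = x"
    and cmp_arr: "\<lbrakk>Arr f; Arr g; Cod f = Dom g\<rbrakk> \<Longrightarrow> Arr (Cmp f g)"
    and cmp_dom: "\<lbrakk>Arr f; Arr g; Cod f = Dom g\<rbrakk> \<Longrightarrow> Dom (Cmp f g) = Dom f"
    and cmp_cod: "\<lbrakk>Arr f; Arr g; Cod f = Dom g\<rbrakk> \<Longrightarrow> Cod (Cmp f g) = Cod g"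
    and id_left: "Arr f \<Longrightarrow> Cmp (Idn (Dom f)) f = f"
    and id_right: "Arr f \<Longrightarrow> Cmp f (Idn (Cod f)) = f"
    and cmp_assoc: "\<lbrakk>Arr f; Arr g; Arr h; Cod f = Dom g; Cod g = Dom h\<rbrakk>
                    \<Longrightarrow> Cmp (Cmp f g) h = Cmp f (Cmp g h)"

definition hom_in :: "('m \<Rightarrow> bool) \<Rightarrow> ('m \<Rightarrow> 'o) \<Rightarrow> ('m \<Rightarrow> 'o) \<Rightarrow> 'm \<Rightarrow> 'o \<Rightarrow> 'o \<Rightarrow> bool" where
  "hom_in Arr Dom Cod f x y \<longleftrightarrow> Arr f \<and> Dom f = x \<and> Cod f = y"

definition inv_arr :: "('m \<Rightarrow> bool) \<Rightarrow> ('m \<Rightarrow> 'o) \<Rightarrow> ('m \<Rightarrow> 'o) \<Rightarrow> ('m \<Rightarrow> 'm \<Rightarrow> 'm)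
     \<Rightarrow> ('o \<Rightarrow> 'm) \<Rightarrow> 'm \<Rightarrow> 'm" where
  "inv_arr Arr Dom Cod Cmp Idn f = (THE g. hom_in Arr Dom Cod g (Cod f) (Dom f)
      \<and> Cmp f g = Idn (Dom f) \<and> Cmp g f = Idn (Cod f))"

definition is_iso :: "('m \<Rightarrow> bool) \<Rightarrow> ('m \<Rightarrow> 'o) \<Rightarrow> ('m \<Rightarrow> 'o) \<Rightarrow> ('m \<Rightarrow> 'm \<Rightarrow> 'm)
     \<Rightarrow> ('o \<Rightarrow> 'm) \<Rightarrow> 'm \<Rightarrow> bool" where
  "is_iso Arr Dom Cod Cmp Idn f \<longleftrightarrow> Arr f \<and> (\<exists>g. hom_in Arr Dom Cod g (Cod f) (Dom f)
      \<and> Cmp f g = Idn (Dom f) \<and> Cmp g f = Idn (Cod f))"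

locale monoidal_category = category Arr Dom Cod Cmp Idn
  for Arr :: "'m \<Rightarrow> bool"
    and Dom :: "'m \<Rightarrow> 'o"
    and Cod :: "'m \<Rightarrow> 'o"
    and Cmp :: "'m \<Rightarrow> 'm \<Rightarrow> 'm"
    and Idn :: "'o \<Rightarrow> 'm" +
  fixes Tob :: "'o \<Rightarrow> 'o \<Rightarrow> 'o"
    and Tm :: "'m \<Rightarrow> 'm \<Rightarrow> 'm"
    and Unit :: "'o"
    and Assoc :: "'o \<Rightarrow> 'o \<Rightarrow> 'o \<Rightarrow> 'm"
    and UL :: "'o \<Rightarrow> 'm"
    and UR :: "'o \<Rightarrow> 'm"
  assumes tm_hom: "\<lbrakk>Arr f; Arr g\<rbrakk> \<Longrightarrow> hom_in Arr Dom Cod (Tm f g) (Tob (Dom f) (Dom g)) (Tob (Cod f) (Cod g))"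
    and tm_id: "Tm (Idn x) (Idn y) = Idn (Tob x y)"
    and tm_cmp: "\<lbrakk>Arr f; Arr f'; Arr g; Arr g'; Cod f = Dom f'; Cod g = Dom g'\<rbrakk>
                 \<Longrightarrow> Tm (Cmp f f') (Cmp g g') = Cmp (Tm f g) (Tm f' g')"
    and assoc_hom: "hom_in Arr Dom Cod (Assoc x y z) (Tob (Tob x y) z) (Tob x (Tob y z))"
    and assoc_iso: "is_iso Arr Dom Cod Cmp Idn (Assoc x y z)"
    and assoc_nat: "\<lbrakk>Arr f; Arr g; Arr h\<rbrakk> \<Longrightarrow>
        Cmp (Tm (Tm f g) h) (Assoc (Cod f) (Cod g) (Cod h)) = Cmp (Assoc (Dom f) (Dom g) (Dom h)) (Tm f (Tm g h))"
    and ul_hom: "hom_in Arr Dom Cod (UL x) (Tob Unit x) x"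
    and ul_iso: "is_iso Arr Dom Cod Cmp Idn (UL x)"
    and ul_nat: "Arr f \<Longrightarrow> Cmp (Tm (Idn Unit) f) (UL (Cod f)) = Cmp (UL (Dom f)) f"
    and ur_hom: "hom_in Arr Dom Cod (UR x) (Tob x Unit) x"
    and ur_iso: "is_iso Arr Dom Cod Cmp Idn (UR x)"
    and ur_nat: "Arr f \<Longrightarrow> Cmp (Tm f (Idn Unit)) (UR (Cod f)) = Cmp (UR (Dom f)) f"
    and pentagon: "Cmp (Tm (Assoc w x y) (Idn z)) (Cmp (Assoc w (Tob x y) z) (Tm (Idn w) (Assoc x y z)))
                   = Cmp (Assoc (Tob w x) y z) (Assoc w x (Tob y z))"
    and triangle: "Cmp (Assoc x Unit y) (Tm (Idn x) (UL y)) = Tm (UR x) (Idn y)"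

locale enriched_category = monoidal_category Arr Dom Cod Cmp Idn Tob Tm Unit Assoc UL UR
  for Arr :: "'m \<Rightarrow> bool"
    and Dom :: "'m \<Rightarrow> 'o"
    and Cod :: "'m \<Rightarrow> 'o"
    and Cmp :: "'m \<Rightarrow> 'm \<Rightarrow> 'm"
    and Idn :: "'o \<Rightarrow> 'm"
    and Tob :: "'o \<Rightarrow> 'o \<Rightarrow> 'o"
    and Tm :: "'m \<Rightarrow> 'm \<Rightarrow> 'm"
    and Unit :: "'o"
    and Assoc :: "'o \<Rightarrow> 'o \<Rightarrow> 'o \<Rightarrow> 'm"
    and UL :: "'o \<Rightarrow> 'm"
    and UR :: "'o \<Rightarrow> 'm" +
  fixes Hom :: "'x \<Rightarrow> 'x \<Rightarrow> 'o"
    and Mc :: "'x \<Rightarrow> 'x \<Rightarrow> 'x \<Rightarrow> 'm"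
    and Ide :: "'x \<Rightarrow> 'm"
  assumes mc_hom: "hom_in Arr Dom Cod (Mc X Y Z) (Tob (Hom X Y) (Hom Y Z)) (Hom X Z)"
    and ide_hom: "hom_in Arr Dom Cod (Ide X) Unit (Hom X X)"
    and mc_assoc: "Cmp (Tm (Mc W X Y) (Idn (Hom Y Z))) (Mc W Y Z)
        = Cmp (Assoc (Hom W X) (Hom X Y) (Hom Y Z)) (Cmp (Tm (Idn (Hom W X)) (Mc X Y Z)) (Mc W X Z))"
    and mc_unit_left: "Cmp (Tm (Ide X) (Idn (Hom X Y))) (Mc X X Y) = UL (Hom X Y)"
    and mc_unit_right: "Cmp (Tm (Idn (Hom X Y)) (Ide Y)) (Mc X Y Y) = UR (Hom X Y)"

end

theory Submission
  imports Defs
begin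

context category begin

lemma cmp_ty[simp]:
  assumes "Arr f" "Arr g" "Cod f = Dom g"
  shows "Arr (Cmp f g)" "Dom (Cmp f g) = Dom f" "Cod (Cmp f g) = Cod g"
  using assms cmp_arr cmp_dom cmp_cod by auto

lemma idn_ty[simp]: "Arr (Idn x)" "Dom (Idn x) = x" "Cod (Idn x) = x"
  using id_arr id_dom id_cod by auto

lemma idl'[simp]: "Arr f \<Longrightarrow> Dom f = x \<Longrightarrow> Cmp (Idn x) f = f"
  using id_left by auto
lemma idr'[simp]: "Arr f \<Longrightarrow> Cod f = x \<Longrightarrow> Cmp f (Idn x) = f"
  using id_right by auto

lemma inv_unique:
  assumes "Arr f" "hom_in Arr Dom Cod g (Cod f) (Dom f)" "Cmp f g = Idn (Dom f)" "Cmp g f = Idn (Cod f)"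
    "hom_in Arr Dom Cod g' (Cod f) (Dom f)" "Cmp f g' = Idn (Dom f)" "Cmp g' f = Idn (Cod f)"
  shows "g = g'"
proof -
  have "g = Cmp g (Idn (Dom f))" using assms id_right unfolding hom_in_def by metis
  also have "... = Cmp g (Cmp f g')" using assms by simp
  also have "... = Cmp (Cmp g f) g'" using assms cmp_assoc unfolding hom_in_def by metis
  also have "... = g'" using assms id_left unfolding hom_in_def by metis
  finally show ?thesis .
qed

lemma inv_props:
  assumes "is_iso Arr Dom Cod Cmp Idn f"
  shows "Arr (inv_arr Arr Dom Cod Cmp Idn f)" "Dom (inv_arr Arr Dom Cod Cmp Idn f) = Cod f"
    "Cod (inv_arr Arr Dom Cod Cmp Idn f) = Dom f"
    "Cmp f (inv_arr Arr Dom Cod Cmp Idn f) = Idn (Dom f)"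
    "Cmp (inv_arr Arr Dom Cod Cmp Idn f) f = Idn (Cod f)"
proof -
  from assms obtain g where g: "Arr f" "hom_in Arr Dom Cod g (Cod f) (Dom f)" "Cmp f g = Idn (Dom f)" "Cmp g f = Idn (Cod f)"
    unfolding is_iso_def by blast
  have "hom_in Arr Dom Cod (inv_arr Arr Dom Cod Cmp Idn f) (Cod f) (Dom f)
      \<and> Cmp f (inv_arr Arr Dom Cod Cmp Idn f) = Idn (Dom f) \<and> Cmp (inv_arr Arr Dom Cod Cmp Idn f) f = Idn (Cod f)"
    unfolding inv_arr_def
    apply (rule theI[where a=g])
    using g apply blast
    using g inv_unique by blast
  then show "Arr (inv_arr Arr Dom Cod Cmp Idn f)" "Dom (inv_arr Arr Dom Cod Cmp Idn f) = Cod f"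
    "Cod (inv_arr Arr Dom Cod Cmp Idn f) = Dom f"
    "Cmp f (inv_arr Arr Dom Cod Cmp Idn f) = Idn (Dom f)"
    "Cmp (inv_arr Arr Dom Cod Cmp Idn f) f = Idn (Cod f)" unfolding hom_in_def by auto
qed

end

context monoidal_category begin

lemma tm_ty[simp]:
  assumes "Arr f" "Arr g"
  shows "Arr (Tm f g)" "Dom (Tm f g) = Tob (Dom f) (Dom g)" "Cod (Tm f g) = Tob (Cod f) (Cod g)"
  using tm_hom[OF assms] unfolding hom_in_def by auto

lemma assoc_ty[simp]: "Arr (Assoc x y z)" "Dom (Assoc x y z) = Tob (Tob x y) z" "Cod (Assoc x y z) = Tob x (Tob y z)"
  using assoc_hom unfolding hom_in_def by auto
lemma ul_ty[simp]: "Arr (UL x)" "Dom (UL x) = Tob Unit x" "Cod (UL x) = x"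
  using ul_hom unfolding hom_in_def by auto
lemma ur_ty[simp]: "Arr (UR x)" "Dom (UR x) = Tob x Unit" "Cod (UR x) = x"
  using ur_hom unfolding hom_in_def by auto

abbreviation "ai x y z \<equiv> inv_arr Arr Dom Cod Cmp Idn (Assoc x y z)"
abbreviation "uli x \<equiv> inv_arr Arr Dom Cod Cmp Idn (UL x)"
abbreviation "uri x \<equiv> inv_arr Arr Dom Cod Cmp Idn (UR x)"

lemma ai_ty[simp]: "Arr (ai x y z)" "Dom (ai x y z) = Tob x (Tob y z)" "Cod (ai x y z) = Tob (Tob x y) z"
  "Cmp (Assoc x y z) (ai x y z) = Idn (Tob (Tob x y) z)" "Cmp (ai x y z) (Assoc x y z) = Idn (Tob x (Tob y z))"
  using inv_props[OF assoc_iso[of x y z]] by auto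
lemma uli_ty[simp]: "Arr (uli x)" "Dom (uli x) = x" "Cod (uli x) = Tob Unit x"
  "Cmp (UL x) (uli x) = Idn (Tob Unit x)" "Cmp (uli x) (UL x) = Idn x"
  using inv_props[OF ul_iso[of x]] by auto
lemma uri_ty[simp]: "Arr (uri x)" "Dom (uri x) = x" "Cod (uri x) = Tob x Unit"
  "Cmp (UR x) (uri x) = Idn (Tob x Unit)" "Cmp (uri x) (UR x) = Idn x"
  using inv_props[OF ur_iso[of x]] by auto

lemma key_iso: "Cmp (Tm (Idn A) (uli B)) (ai A Unit B) = Tm (uri A) (Idn B)"
proof -
  let ?L = "Cmp (Tm (Idn A) (uli B)) (ai A Unit B)"
  let ?T = "Tm (UR A) (Idn B)"
  let ?R = "Tm (uri A) (Idn B)"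
  have TL: "Cmp ?T ?L = Idn (Tob (Tob A Unit) B)"
  proof -
    have "Cmp ?T ?L = Cmp (Cmp (Assoc A Unit B) (Tm (Idn A) (UL B))) ?L" using triangle by simp
    also have "... = Cmp (Assoc A Unit B) (Cmp (Cmp (Tm (Idn A) (UL B)) (Tm (Idn A) (uli B))) (ai A Unit B))"
      by (simp add: cmp_assoc)
    also have "... = Cmp (Assoc A Unit B) (Cmp (Tm (Cmp (Idn A) (Idn A)) (Cmp (UL B) (uli B))) (ai A Unit B))"
      using tm_cmp[of "Idn A" "Idn A" "UL B" "uli B"] by simp
    also have "... = Idn (Tob (Tob A Unit) B)"
      by (simp add: id_left tm_id)
    finally show ?thesis .
  qed
  have RT: "Cmp ?R ?T = Idn (Tob A B)"
    by (simp flip: tm_cmp add: id_left tm_id)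
  have "?L = Cmp (Idn (Tob A B)) ?L" using id_left[of ?L] by simp
  also have "... = Cmp (Cmp ?R ?T) ?L" using RT by simp
  also have "... = Cmp ?R (Cmp ?T ?L)" by (simp add: cmp_assoc)
  also have "... = ?R" using TL id_right[of ?R] by simp
  finally show ?thesis .
qed

end

context enriched_category begin
lemma mc_ty[simp]: "Arr (Mc X Y Z)" "Dom (Mc X Y Z) = Tob (Hom X Y) (Hom Y Z)" "Cod (Mc X Y Z) = Hom X Z"
  using mc_hom unfolding hom_in_def by auto
lemma ide_ty[simp]: "Arr (Ide X)" "Dom (Ide X) = Unit" "Cod (Ide X) = Hom X X"
  using ide_hom unfolding hom_in_def by auto
end


context enriched_category begin

lemma main:
  fixes X XA :: 'x and A :: 'o
    and down :: "'o \<Rightarrow> 'x \<Rightarrow> 'm \<Rightarrow> 'm" and up :: "'o \<Rightarrow> 'x \<Rightarrow> 'm \<Rightarrow> 'm"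
  assumes down_hom: "\<And>B Y f. hom_in Arr Dom Cod f B (Hom XA Y) \<Longrightarrow>
                      hom_in Arr Dom Cod (down B Y f) (Tob A B) (Hom X Y)"
    and up_hom: "\<And>B Y g. hom_in Arr Dom Cod g (Tob A B) (Hom X Y) \<Longrightarrow>
                      hom_in Arr Dom Cod (up B Y g) B (Hom XA Y)"
    and up_down: "\<And>B Y f. hom_in Arr Dom Cod f B (Hom XA Y) \<Longrightarrow> up B Y (down B Y f) = f"
    and down_up: "\<And>B Y g. hom_in Arr Dom Cod g (Tob A B) (Hom X Y) \<Longrightarrow> down B Y (up B Y g) = g"
  shows "(\<exists>\<eta>. hom_in Arr Dom Cod \<eta> A (Hom X XA) \<and>
            (\<forall>B Y f. hom_in Arr Dom Cod f B (Hom XA Y) \<longrightarrow>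
                 down B Y f = Cmp (Tm \<eta> f) (Mc X XA Y)))
     \<longleftrightarrow>
     ((\<forall>B B' Y h f. hom_in Arr Dom Cod h B' B \<and> hom_in Arr Dom Cod f B (Hom XA Y) \<longrightarrow>
          Cmp (Tm (Idn A) h) (down B Y f) = down B' Y (Cmp h f))
    \<and> (\<forall>B B' Y h g. hom_in Arr Dom Cod h B' B \<and> hom_in Arr Dom Cod g (Tob A B) (Hom X Y) \<longrightarrow>
          Cmp h (up B Y g) = up B' Y (Cmp (Tm (Idn A) h) g))
    \<and> (\<forall>B C Y Z f g. hom_in Arr Dom Cod f B (Hom XA Y) \<and> hom_in Arr Dom Cod g C (Hom Y Z) \<longrightarrow>
          Cmp (Tm (down B Y f) g) (Mc X Y Z)
            = Cmp (Assoc A B C) (down (Tob B C) Z (Cmp (Tm f g) (Mc XA Y Z))))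
    \<and> (\<forall>B C Y Z f g. hom_in Arr Dom Cod f (Tob A B) (Hom X Y) \<and> hom_in Arr Dom Cod g C (Hom Y Z) \<longrightarrow>
          Cmp (Tm (up B Y f) g) (Mc XA Y Z)
            = up (Tob B C) Z (Cmp (inv_arr Arr Dom Cod Cmp Idn (Assoc A B C)) (Cmp (Tm f g) (Mc X Y Z)))))"
    (is "?I \<longleftrightarrow> ?a \<and> ?b \<and> ?c \<and> ?d")
proof -
  have dty[simp]: "Arr (down B Y f)" "Dom (down B Y f) = Tob A B" "Cod (down B Y f) = Hom X Y"
    if "Arr f" "Dom f = B" "Cod f = Hom XA Y" for B Y f
    using down_hom[of f B Y] that unfolding hom_in_def by auto
  have uty[simp]: "Arr (up B Y g)" "Dom (up B Y g) = B" "Cod (up B Y g) = Hom XA Y"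
    if "Arr g" "Dom g = Tob A B" "Cod g = Hom X Y" for B Y g
    using up_hom[of g B Y] that unfolding hom_in_def by auto
  have ud: "up B Y (down B Y f) = f" if "Arr f" "Dom f = B" "Cod f = Hom XA Y" for B Y f
    using up_down[of f B Y] that unfolding hom_in_def by auto
  have du: "down B Y (up B Y g) = g" if "Arr g" "Dom g = Tob A B" "Cod g = Hom X Y" for B Y g
    using down_up[of g B Y] that unfolding hom_in_def by auto
  show ?thesis
  proof
    assume ?I
    then obtain \<eta> where et: "Arr \<eta>" "Dom \<eta> = A" "Cod \<eta> = Hom X XA"
      and eq: "\<And>B Y f. Arr f \<Longrightarrow> Dom f = B \<Longrightarrow> Cod f = Hom XA Y \<Longrightarrow> down B Y f = Cmp (Tm \<eta> f) (Mc X XA Y)"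
      unfolding hom_in_def by blast
    have A: "Cmp (Tm (Idn A) h) (down B Y f) = down B' Y (Cmp h f)"
      if h: "Arr h" "Dom h = B'" "Cod h = B" and f: "Arr f" "Dom f = B" "Cod f = Hom XA Y" for B B' Y h f
    proof -
      have "Cmp (Tm (Idn A) h) (down B Y f) = Cmp (Tm (Idn A) h) (Cmp (Tm \<eta> f) (Mc X XA Y))"
        using eq f by simp
      also have "... = Cmp (Cmp (Tm (Idn A) h) (Tm \<eta> f)) (Mc X XA Y)"
        using h f et by (simp add: cmp_assoc)
      also have "... = Cmp (Tm (Cmp (Idn A) \<eta>) (Cmp h f)) (Mc X XA Y)"
        using h f et tm_cmp[of "Idn A" \<eta> h f] by simp
      also have "... = down B' Y (Cmp h f)"
        using h f et eq[of "Cmp h f" B' Y] by simp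
      finally show ?thesis .
    qed
    have C: "Cmp (Tm (down B Y f) g) (Mc X Y Z)
            = Cmp (Assoc A B C) (down (Tob B C) Z (Cmp (Tm f g) (Mc XA Y Z)))"
      if f: "Arr f" "Dom f = B" "Cod f = Hom XA Y" and g: "Arr g" "Dom g = C" "Cod g = Hom Y Z" for B C Y Z f g
    proof -
      have "Cmp (Tm (down B Y f) g) (Mc X Y Z)
          = Cmp (Tm (Cmp (Tm \<eta> f) (Mc X XA Y)) (Cmp g (Idn (Hom Y Z)))) (Mc X Y Z)"
        using eq f g by simp
      also have "... = Cmp (Cmp (Tm (Tm \<eta> f) g) (Tm (Mc X XA Y) (Idn (Hom Y Z)))) (Mc X Y Z)"
        using f g et tm_cmp[of "Tm \<eta> f" "Mc X XA Y" g "Idn (Hom Y Z)"] by simp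
      also have "... = Cmp (Tm (Tm \<eta> f) g) (Cmp (Tm (Mc X XA Y) (Idn (Hom Y Z))) (Mc X Y Z))"
        using f g et by (simp add: cmp_assoc)
      also have "... = Cmp (Tm (Tm \<eta> f) g) (Cmp (Assoc (Hom X XA) (Hom XA Y) (Hom Y Z))
               (Cmp (Tm (Idn (Hom X XA)) (Mc XA Y Z)) (Mc X XA Z)))"
        by (simp add: mc_assoc)
      also have "... = Cmp (Cmp (Tm (Tm \<eta> f) g) (Assoc (Hom X XA) (Hom XA Y) (Hom Y Z)))
               (Cmp (Tm (Idn (Hom X XA)) (Mc XA Y Z)) (Mc X XA Z))"
        using f g et by (simp add: cmp_assoc)
      also have "... = Cmp (Cmp (Assoc A B C) (Tm \<eta> (Tm f g)))
               (Cmp (Tm (Idn (Hom X XA)) (Mc XA Y Z)) (Mc X XA Z))"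
        using f g et assoc_nat[of \<eta> f g] by simp
      also have "... = Cmp (Assoc A B C) (Cmp (Cmp (Tm \<eta> (Tm f g))
               (Tm (Idn (Hom X XA)) (Mc XA Y Z))) (Mc X XA Z))"
        using f g et by (simp add: cmp_assoc)
      also have "... = Cmp (Assoc A B C) (Cmp (Tm (Cmp \<eta> (Idn (Hom X XA))) (Cmp (Tm f g) (Mc XA Y Z))) (Mc X XA Z))"
        using f g et tm_cmp[of \<eta> "Idn (Hom X XA)" "Tm f g" "Mc XA Y Z"] by simp
      also have "... = Cmp (Assoc A B C) (down (Tob B C) Z (Cmp (Tm f g) (Mc XA Y Z)))"
        using f g et eq[of "Cmp (Tm f g) (Mc XA Y Z)" "Tob B C" Z] by simp
      finally show ?thesis .
    qed
    have "?a" unfolding hom_in_def using A by blast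
    moreover have "?b"
    proof (intro allI impI)
      fix B B' Y h g
      assume "hom_in Arr Dom Cod h B' B \<and> hom_in Arr Dom Cod g (Tob A B) (Hom X Y)"
      then have h: "Arr h" "Dom h = B'" "Cod h = B" and g: "Arr g" "Dom g = Tob A B" "Cod g = Hom X Y"
        unfolding hom_in_def by auto
      have "Cmp (Tm (Idn A) h) g = down B' Y (Cmp h (up B Y g))"
        using A[of h B' B "up B Y g" Y] h g du by simp
      then have "up B' Y (Cmp (Tm (Idn A) h) g) = Cmp h (up B Y g)"
        using ud h g by simp
      then show "Cmp h (up B Y g) = up B' Y (Cmp (Tm (Idn A) h) g)" by simp
    qed
    moreover have "?c" unfolding hom_in_def using C by blast
    moreover have "?d"
    proof (intro allI impI)
      fix B C Y Z f g
      assume "hom_in Arr Dom Cod f (Tob A B) (Hom X Y) \<and> hom_in Arr Dom Cod g C (Hom Y Z)"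
      then have f: "Arr f" "Dom f = Tob A B" "Cod f = Hom X Y" and g: "Arr g" "Dom g = C" "Cod g = Hom Y Z"
        unfolding hom_in_def by auto
      have "Cmp (Tm f g) (Mc X Y Z) = Cmp (Assoc A B C) (down (Tob B C) Z (Cmp (Tm (up B Y f) g) (Mc XA Y Z)))"
        using C[of "up B Y f" B Y g C Z] f g du by simp
      then have "Cmp (ai A B C) (Cmp (Tm f g) (Mc X Y Z)) = Cmp (Cmp (ai A B C) (Assoc A B C)) (down (Tob B C) Z (Cmp (Tm (up B Y f) g) (Mc XA Y Z)))"
        using f g cmp_assoc[of "ai A B C" "Assoc A B C" "down (Tob B C) Z (Cmp (Tm (up B Y f) g) (Mc XA Y Z))"] by simp
      also have "... = down (Tob B C) Z (Cmp (Tm (up B Y f) g) (Mc XA Y Z))"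
        using f g by simp
      finally show "Cmp (Tm (up B Y f) g) (Mc XA Y Z)
            = up (Tob B C) Z (Cmp (ai A B C) (Cmp (Tm f g) (Mc X Y Z)))"
        using f g ud by simp
    qed
    ultimately show "?a \<and> ?b \<and> ?c \<and> ?d" by blast
  next
    assume H: "?a \<and> ?b \<and> ?c \<and> ?d"
    have A: "\<And>B B' Y h f. Arr h \<Longrightarrow> Dom h = B' \<Longrightarrow> Cod h = B \<Longrightarrow> Arr f \<Longrightarrow> Dom f = B \<Longrightarrow> Cod f = Hom XA Y \<Longrightarrow>
          Cmp (Tm (Idn A) h) (down B Y f) = down B' Y (Cmp h f)"
      using H[THEN conjunct1] unfolding hom_in_def by auto
    have C: "\<And>B C Y Z f g. Arr f \<Longrightarrow> Dom f = B \<Longrightarrow> Cod f = Hom XA Y \<Longrightarrow> Arr g \<Longrightarrow> Dom g = C \<Longrightarrow> Cod g = Hom Y Z \<Longrightarrow>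
          Cmp (Tm (down B Y f) g) (Mc X Y Z)
            = Cmp (Assoc A B C) (down (Tob B C) Z (Cmp (Tm f g) (Mc XA Y Z)))"
      using H[THEN conjunct2, THEN conjunct2, THEN conjunct1] unfolding hom_in_def by auto
    define D where "D = down Unit XA (Ide XA)"
    have Dt[simp]: "Arr D" "Dom D = Tob A Unit" "Cod D = Hom X XA" unfolding D_def by simp_all
    define \<eta> where "\<eta> = Cmp (uri A) D"
    have et[simp]: "Arr \<eta>" "Dom \<eta> = A" "Cod \<eta> = Hom X XA" unfolding \<eta>_def by simp_all
    show ?I
    proof (intro exI conjI allI impI)
      show "hom_in Arr Dom Cod \<eta> A (Hom X XA)" unfolding hom_in_def by simp
      fix B Y f
      assume "hom_in Arr Dom Cod f B (Hom XA Y)"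
      then have f[simp]: "Arr f" "Dom f = B" "Cod f = Hom XA Y" unfolding hom_in_def by auto
      define k where "k = Cmp (Tm (Ide XA) f) (Mc XA XA Y)"
      have kt[simp]: "Arr k" "Dom k = Tob Unit B" "Cod k = Hom XA Y" unfolding k_def by simp_all
      have s1: "f = Cmp (uli B) k"
      proof -
        have "Tm (Ide XA) f = Tm (Cmp (Idn Unit) (Ide XA)) (Cmp f (Idn (Hom XA Y)))" by simp
        also have "... = Cmp (Tm (Idn Unit) f) (Tm (Ide XA) (Idn (Hom XA Y)))"
          by (rule tm_cmp) simp_all
        finally have "k = Cmp (Cmp (Tm (Idn Unit) f) (Tm (Ide XA) (Idn (Hom XA Y)))) (Mc XA XA Y)"
          unfolding k_def by simp
        also have "... = Cmp (Tm (Idn Unit) f) (UL (Hom XA Y))"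
          by (simp add: cmp_assoc mc_unit_left)
        also have "... = Cmp (UL B) f" using ul_nat[of f] by simp
        finally have "Cmp (uli B) k = Cmp (Cmp (uli B) (UL B)) f"
          using cmp_assoc[of "uli B" "UL B" f] by simp
        then show ?thesis by simp
      qed
      have s2: "down B Y f = Cmp (Tm (Idn A) (uli B)) (down (Tob Unit B) Y k)"
        using A[of "uli B" B "Tob Unit B" k Y] s1 by simp
      have s3: "down (Tob Unit B) Y k = Cmp (ai A Unit B) (Cmp (Tm D f) (Mc X XA Y))"
      proof -
        have "Cmp (Tm D f) (Mc X XA Y) = Cmp (Assoc A Unit B) (down (Tob Unit B) Y k)"
          using C[of "Ide XA" Unit XA f B Y] unfolding D_def k_def by simp
        then have "Cmp (ai A Unit B) (Cmp (Tm D f) (Mc X XA Y)) = Cmp (Cmp (ai A Unit B) (Assoc A Unit B)) (down (Tob Unit B) Y k)"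
          using cmp_assoc[of "ai A Unit B" "Assoc A Unit B" "down (Tob Unit B) Y k"] by simp
        then show ?thesis by simp
      qed
      have "down B Y f = Cmp (Cmp (Tm (Idn A) (uli B)) (ai A Unit B)) (Cmp (Tm D f) (Mc X XA Y))"
        using s2 s3 by (simp add: cmp_assoc)
      also have "... = Cmp (Tm (uri A) (Idn B)) (Cmp (Tm D f) (Mc X XA Y))"
        using key_iso by simp
      also have "... = Cmp (Cmp (Tm (uri A) (Idn B)) (Tm D f)) (Mc X XA Y)"
        by (simp add: cmp_assoc)
      also have "... = Cmp (Tm \<eta> f) (Mc X XA Y)"
        unfolding \<eta>_def using tm_cmp[of "uri A" D "Idn B" f] by simp
      finally show "down B Y f = Cmp (Tm \<eta> f) (Mc X XA Y)" .
    qed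
  qed
qed

end

theorem mainTheorem4:
  fixes Arr :: "'m \<Rightarrow> bool" and Dom Cod :: "'m \<Rightarrow> 'o"
    and Cmp :: "'m \<Rightarrow> 'm \<Rightarrow> 'm" and Idn :: "'o \<Rightarrow> 'm"
    and Tob :: "'o \<Rightarrow> 'o \<Rightarrow> 'o" and Tm :: "'m \<Rightarrow> 'm \<Rightarrow> 'm" and Unit :: 'o
    and Assoc :: "'o \<Rightarrow> 'o \<Rightarrow> 'o \<Rightarrow> 'm" and UL UR :: "'o \<Rightarrow> 'm"
    and Hom :: "'x \<Rightarrow> 'x \<Rightarrow> 'o" and Mc :: "'x \<Rightarrow> 'x \<Rightarrow> 'x \<Rightarrow> 'm" and Ide :: "'x \<Rightarrow> 'm"
    and X XA :: 'x and A :: 'o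
    and down :: "'o \<Rightarrow> 'x \<Rightarrow> 'm \<Rightarrow> 'm" and up :: "'o \<Rightarrow> 'x \<Rightarrow> 'm \<Rightarrow> 'm"
  assumes enr: "enriched_category Arr Dom Cod Cmp Idn Tob Tm Unit Assoc UL UR Hom Mc Ide"
    and down_hom: "\<And>B Y f. hom_in Arr Dom Cod f B (Hom XA Y) \<Longrightarrow>
                      hom_in Arr Dom Cod (down B Y f) (Tob A B) (Hom X Y)"
    and up_hom: "\<And>B Y g. hom_in Arr Dom Cod g (Tob A B) (Hom X Y) \<Longrightarrow>
                      hom_in Arr Dom Cod (up B Y g) B (Hom XA Y)"
    and up_down: "\<And>B Y f. hom_in Arr Dom Cod f B (Hom XA Y) \<Longrightarrow> up B Y (down B Y f) = f"
    and down_up: "\<And>B Y g. hom_in Arr Dom Cod g (Tob A B) (Hom X Y) \<Longrightarrow> down B Y (up B Y g) = g"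
  shows "(\<exists>\<eta>. hom_in Arr Dom Cod \<eta> A (Hom X XA) \<and>
            (\<forall>B Y f. hom_in Arr Dom Cod f B (Hom XA Y) \<longrightarrow>
                 down B Y f = Cmp (Tm \<eta> f) (Mc X XA Y)))
     \<longleftrightarrow>
     ((\<forall>B B' Y h f. hom_in Arr Dom Cod h B' B \<and> hom_in Arr Dom Cod f B (Hom XA Y) \<longrightarrow>
          Cmp (Tm (Idn A) h) (down B Y f) = down B' Y (Cmp h f))
    \<and> (\<forall>B B' Y h g. hom_in Arr Dom Cod h B' B \<and> hom_in Arr Dom Cod g (Tob A B) (Hom X Y) \<longrightarrow>
          Cmp h (up B Y g) = up B' Y (Cmp (Tm (Idn A) h) g))
    \<and> (\<forall>B C Y Z f g. hom_in Arr Dom Cod f B (Hom XA Y) \<and> hom_in Arr Dom Cod g C (Hom Y Z) \<longrightarrow>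
          Cmp (Tm (down B Y f) g) (Mc X Y Z)
            = Cmp (Assoc A B C) (down (Tob B C) Z (Cmp (Tm f g) (Mc XA Y Z))))
    \<and> (\<forall>B C Y Z f g. hom_in Arr Dom Cod f (Tob A B) (Hom X Y) \<and> hom_in Arr Dom Cod g C (Hom Y Z) \<longrightarrow>
          Cmp (Tm (up B Y f) g) (Mc XA Y Z)
            = up (Tob B C) Z (Cmp (inv_arr Arr Dom Cod Cmp Idn (Assoc A B C)) (Cmp (Tm f g) (Mc X Y Z)))))"
  by (rule enriched_category.main[OF enr down_hom up_hom up_down down_up])

end
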